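(* Let $K$ be a non-Archimedean locally compact field of characteristic $p>0$ with group of 1-units $U=1+M_K$. Let $f:U\to U$ be a locally analytic group endomorphism with $f(1+x)=\sum_{n=0}^{\infty}a_nx^n$ for all $x\in M_K$, where $\sum a_nx^n\in 1+x\mathbb{F}_p[[x]]$. If $a_n=0$ for all but finitely many $n$, then $f(1+x)=(1+x)^N$ for some integer $N\ge0$.
   Context: $M_K$ is the maximal ideal of the ring of integers $R_K$ of $K$; with constant field $\mathbb{F}$ of order $q$ and uniformizer $\pi$, $K=\mathbb{F}((\pi))$, $U=1+\pi\mathbb{F}[[\pi]]$, and $|x|=q^{-v(x)}$. A continuous function $f$ on a ball $B_{\alpha,t}=\{u\in R_K:|u-\alpha|\le t\}$, $t=|\rho|$, is analytic there if $f(u)=\sum_{n\ge0}c_n\left(\frac{u-\alpha}{\rho}\right)^n$ with $c_n\in K$, $c_n\to0$; $f:U\to K$ is locally analytic if each $\alpha\in U$ has a ball $B_{\alpha,t_\alpha}\subset U$, $t_\alpha>0$, on which $f$ is analytic. *)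

theory Defs
  imports "HOL-Computational_Algebra.Formal_Laurent_Series"
begin

text \<open>K = F((pi)) is modelled as the type of formal Laurent series over a finite field
  'a (the constant field F, of order q = card UNIV); the uniformizer is fls_X and the
  valuation is fls_subdegree.  The library topology on fls (metric 2^(-v)) coincides with
  the topology of the absolute value q^(-v).\<close>

definition vabs :: "'a::{field,finite} fls \<Rightarrow> real" where
  "vabs x = (if x = 0 then 0 else real (card (UNIV :: 'a set)) powr (- real_of_int (fls_subdegree x)))"

definition RK :: "'a::{field,finite} fls set" where
  "RK = {x. x = 0 \<or> fls_subdegree x \<ge> 0}"

definition MK :: "'a::{field,finite} fls set" where
  "MK = {x. x = 0 \<or> fls_subdegree x > 0}"

definition UK :: "'a::{field,finite} fls set" where
  "UK = (\<lambda>x. 1 + x) ` MK"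

definition vball :: "'a::{field,finite} fls \<Rightarrow> 'a fls \<Rightarrow> 'a fls set" where
  "vball \<alpha> \<rho> = {u \<in> RK. vabs (u - \<alpha>) \<le> vabs \<rho>}"

definition analytic_on_vball ::
  "('a::{field,finite} fls \<Rightarrow> 'a fls) \<Rightarrow> 'a fls \<Rightarrow> 'a fls \<Rightarrow> bool" where
  "analytic_on_vball f \<alpha> \<rho> \<longleftrightarrow>
     continuous_on (vball \<alpha> \<rho>) f \<and>
     (\<exists>c :: nat \<Rightarrow> 'a fls. c \<longlonglongrightarrow> 0 \<and>
        (\<forall>u \<in> vball \<alpha> \<rho>. (\<lambda>n. c n * ((u - \<alpha>) / \<rho>) ^ n) sums f u))"

definition locally_analytic_U :: "('a::{field,finite} fls \<Rightarrow> 'a fls) \<Rightarrow> bool" where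
  "locally_analytic_U f \<longleftrightarrow>
     (\<forall>\<alpha> \<in> UK. \<exists>\<rho>. \<rho> \<noteq> 0 \<and> vball \<alpha> \<rho> \<subseteq> UK \<and> analytic_on_vball f \<alpha> \<rho>)"

end

theory Submission
  imports Defs "HOL-Computational_Algebra.Polynomial"
begin

lemma MK_mult_closed:
  fixes x y :: "'a::{field,finite} fls"
  assumes "x \<in> MK" "y \<in> MK"
  shows "x + y + x * y \<in> MK"
proof -
  have m: "x * y \<in> MK"
  proof (cases "x = 0 \<or> y = 0")
    case False
    then show ?thesis using assms by (auto simp: MK_def fls_subdegree_mult)
  qed (auto simp: MK_def)
  have add: "\<And>x y :: 'a fls. x \<in> MK \<Longrightarrow> y \<in> MK \<Longrightarrow> x + y \<in> MK"
  proof -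
    fix x y :: "'a fls" assume a: "x \<in> MK" "y \<in> MK"
    show "x + y \<in> MK"
    proof (cases "x + y = 0")
      case False
      then have "fls_subdegree (x + y) \<ge> min (fls_subdegree x) (fls_subdegree y)"
        by (rule fls_plus_subdegree)
      moreover have "x = 0 \<or> y = 0 \<or> min (fls_subdegree x) (fls_subdegree y) > 0"
        using a by (auto simp: MK_def)
      ultimately show ?thesis using a by (auto simp: MK_def)
    qed (simp add: MK_def)
  qed
  show ?thesis using add[OF add[OF assms] m] .
qed

lemma UK_mult_closed:
  fixes u v :: "'a::{field,finite} fls"
  assumes "u \<in> UK" "v \<in> UK"
  shows "u * v \<in> UK"
proof -
  obtain x y where "x \<in> MK" "y \<in> MK" "u = 1 + x" "v = 1 + y" using assms by (auto simp: UK_def)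
  then have "u * v = 1 + (x + y + x * y)" "x + y + x * y \<in> MK"
    using MK_mult_closed by (auto simp: algebra_simps)
  then show ?thesis by (auto simp: UK_def)
qed

lemma UK_infinite: "infinite (UK :: 'a::{field,finite} fls set)"
proof
  assume fin: "finite (UK :: 'a fls set)"
  have "range (\<lambda>n::nat. 1 + (fls_X :: 'a fls) ^ Suc n) \<subseteq> UK"
  proof
    fix u assume "u \<in> range (\<lambda>n::nat. 1 + (fls_X :: 'a fls) ^ Suc n)"
    then obtain n where "u = 1 + (fls_X :: 'a fls) ^ Suc n" by auto
    moreover have "(fls_X :: 'a fls) ^ Suc n \<in> MK" unfolding MK_def
      by (simp only: mem_Collect_eq fls_subdegree_fls_X_pow) simp
    ultimately show "u \<in> UK" by (auto simp: UK_def)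
  qed
  moreover have "inj (\<lambda>n::nat. 1 + (fls_X :: 'a fls) ^ Suc n)"
  proof (rule injI)
    fix m n :: nat assume "1 + (fls_X :: 'a fls) ^ Suc m = 1 + fls_X ^ Suc n"
    then have "fls_subdegree ((fls_X :: 'a fls) ^ Suc m) = fls_subdegree ((fls_X :: 'a fls) ^ Suc n)"
      by simp
    then show "m = n" by (simp only: fls_subdegree_fls_X_pow)
  qed
  ultimately show False using fin
    by (meson finite_imageD finite_subset infinite_UNIV_nat)
qed

theorem lemma2p3:
  fixes f :: "'a::{field,finite} fls \<Rightarrow> 'a fls"
    and a :: "nat \<Rightarrow> 'a"
  assumes maps: "\<And>u. u \<in> UK \<Longrightarrow> f u \<in> UK"
    and hom: "\<And>u v. u \<in> UK \<Longrightarrow> v \<in> UK \<Longrightarrow> f (u * v) = f u * f v"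
    and loc_an: "locally_analytic_U f"
    and coeff_Fp: "\<And>n. a n \<in> range of_nat"
    and a0: "a 0 = 1"
    and expand: "\<And>x. x \<in> MK \<Longrightarrow> (\<lambda>n. fls_const (a n) * x ^ n) sums f (1 + x)"
    and fin: "finite {n. a n \<noteq> 0}"
  shows "\<exists>N::nat. \<forall>x \<in> MK. f (1 + x) = (1 + x) ^ N"
proof -
  define S where "S = {n. a n \<noteq> 0}"
  define G :: "'a fls poly" where "G = (\<Sum>n\<in>S. [:fls_const (a n):] * [:-1, 1:] ^ n)"
  have polyG: "poly G u = (\<Sum>n\<in>S. fls_const (a n) * (u - 1) ^ n)" for u
    by (simp add: G_def poly_sum)
  have fG: "f u = poly G u" if uU: "u \<in> UK" for u
  proof -
    obtain x where x: "x \<in> MK" "u = 1 + x" using uU unfolding UK_def by blast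
    have "(\<lambda>n. fls_const (a n) * x ^ n) sums (\<Sum>n\<in>S. fls_const (a n) * x ^ n)"
      by (rule sums_finite) (use fin in \<open>auto simp: S_def\<close>)
    with expand[OF x(1)] have "f (1 + x) = (\<Sum>n\<in>S. fls_const (a n) * x ^ n)"
      using sums_unique2 by blast
    then show ?thesis using x by (simp add: polyG)
  qed
  have "0 \<in> S" using a0 by (simp add: S_def)
  have "poly G 1 = 1"
  proof -
    have "poly G 1 = (\<Sum>n\<in>S. fls_const (a n) * 0 ^ n)" by (simp add: polyG)
    also have "\<dots> = fls_const (a 0)"
      using fin \<open>0 \<in> S\<close> by (simp add: S_def sum.remove[of _ 0] zero_power)
    finally show ?thesis using a0 by simp
  qed
  then have "G \<noteq> 0" by auto
  then obtain k where k: "coeff G k \<noteq> 0"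
    by (metis leading_coeff_0_iff)
  have key: "poly G u = u ^ k" if u: "u \<in> UK" for u
  proof -
    define H where "H = (\<Sum>i\<le>degree G. monom (coeff G i * u ^ i - poly G u * coeff G i) i)"
    have "poly H v = 0" if v: "v \<in> UK" for v
    proof -
      have "poly H v = (\<Sum>i\<le>degree G. coeff G i * (u * v) ^ i) - poly G u * (\<Sum>i\<le>degree G. coeff G i * v ^ i)"
        by (simp add: H_def poly_sum poly_monom algebra_simps sum_subtractf sum_distrib_left power_mult_distrib)
      also have "\<dots> = poly G (u * v) - poly G u * poly G v"
        by (simp add: poly_altdef)
      also have "\<dots> = 0"
        using fG[OF UK_mult_closed[OF u v]] fG[OF u] fG[OF v] hom[OF u v] by simp
      finally show ?thesis .
    qed
    then have "UK \<subseteq> {v. poly H v = 0}" by auto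
    then have "H = 0" using UK_infinite poly_roots_finite finite_subset by blast
    then have "coeff H k = 0" by simp
    moreover have "k \<le> degree G" using k le_degree by blast
    ultimately have "coeff G k * u ^ k - poly G u * coeff G k = 0"
      by (simp add: H_def coeff_sum coeff_monom)
    then show ?thesis using k by (simp add: algebra_simps)
  qed
  show ?thesis
  proof (intro exI ballI)
    fix x :: "'a fls" assume "x \<in> MK"
    then have "1 + x \<in> UK" by (auto simp: UK_def)
    then show "f (1 + x) = (1 + x) ^ k" using fG key by simp
  qed
qed

end
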